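(* Let $I\subseteq\mathbb N$ be a finite index set and let $\{\varphi_n:n\in I\}\subseteq\mathcal H$ be a Riesz basis for its span $\mathcal T=\operatorname{span}\{\varphi_n:n\in I\}$ with constants $d_1,d_2$. Let $I$ be partitioned into disjoint subsets $I_1,\dots,I_r$ and set $\mathcal T_i=\operatorname{span}\{\varphi_n:n\in I_i\}$. Then for all $z\ge0$, $$E(\mathcal T,z)\le\sqrt{\frac{d_2}{d_1}\sum_{i=1}^rE(\mathcal T_i,z)^2},$$ and, for a sequence $\{\omega_n\}_{n\in\mathbb Z}$ giving rise to a Fourier frame for $\mathcal H$ and every $N\in\mathbb N$, $$\tilde E(\mathcal T,N)\le\sqrt{\frac{d_2}{d_1}\sum_{i=1}^r\tilde E(\mathcal T_i,N)^2}.$$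
   Context: $\mathcal H=\{f\in L^2(\mathbb R):\operatorname{supp}f\subseteq[0,1]\}$; $\hat f(\omega)=\int f(x)e^{-2\pi i\omega x}dx$; $\|g\|_J^2=\int_J|g|^2$. Riesz basis with constants $d_1,d_2$: $d_1\sum|a_n|^2\le\|\sum a_n\varphi_n\|^2\le d_2\sum|a_n|^2$ for all coefficients. $E(\mathcal U,z)=\sup\{\|\hat f\|_{\mathbb R\setminus(-z,z)}:f\in\mathcal U,\|f\|=1\}$. A sequence $\{\omega_n\}_{n\in\mathbb Z}$ gives rise to a Fourier frame for $\mathcal H$ if there are $0<A\le B<\infty$ with $A\|f\|^2\le\sum_n|\hat f(\omega_n)|^2\le B\|f\|^2$ for all $f\in\mathcal H$; then $\tilde E(\mathcal U,N)^2=\sup\{\sum_{|n|>N}|\hat f(\omega_n)|^2:f\in\mathcal U,\|f\|=1\}$. *)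

theory Defs
  imports "HOL-Analysis.Analysis"
begin

text \<open>Elements of H = L2 functions supported in [0,1] (represented by a
representative vanishing outside [0,1]).\<close>
definition inH :: "(real \<Rightarrow> complex) \<Rightarrow> bool" where
  "inH f \<longleftrightarrow> f \<in> borel_measurable lborel
     \<and> integrable lborel (\<lambda>x. (cmod (f x))\<^sup>2)
     \<and> (\<forall>x. x \<notin> {0..1} \<longrightarrow> f x = 0)"

definition L2norm :: "(real \<Rightarrow> complex) \<Rightarrow> real" where
  "L2norm f = sqrt (LINT x|lborel. (cmod (f x))\<^sup>2)"

definition normOn :: "real set \<Rightarrow> (real \<Rightarrow> complex) \<Rightarrow> real" where
  "normOn J g = sqrt (LINT x:J|lborel. (cmod (g x))\<^sup>2)"

definition FT :: "(real \<Rightarrow> complex) \<Rightarrow> real \<Rightarrow> complex" where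
  "FT f \<omega> = (LINT x|lborel. f x * cis (- 2 * pi * \<omega> * x))"

definition fspan :: "(nat \<Rightarrow> real \<Rightarrow> complex) \<Rightarrow> nat set \<Rightarrow> (real \<Rightarrow> complex) set" where
  "fspan \<phi> S = {(\<lambda>x. \<Sum>n\<in>S. a n * \<phi> n x) | a. True}"

definition riesz_basis_consts ::
  "(nat \<Rightarrow> real \<Rightarrow> complex) \<Rightarrow> nat set \<Rightarrow> real \<Rightarrow> real \<Rightarrow> bool" where
  "riesz_basis_consts \<phi> I d1 d2 \<longleftrightarrow> 0 < d1 \<and> d1 \<le> d2 \<and>
     (\<forall>a::nat \<Rightarrow> complex.
        d1 * (\<Sum>n\<in>I. (cmod (a n))\<^sup>2) \<le> (L2norm (\<lambda>x. \<Sum>n\<in>I. a n * \<phi> n x))\<^sup>2 \<and>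
        (L2norm (\<lambda>x. \<Sum>n\<in>I. a n * \<phi> n x))\<^sup>2 \<le> d2 * (\<Sum>n\<in>I. (cmod (a n))\<^sup>2))"

text \<open>E(U,z); the supremum of an empty set of nonnegative numbers is taken to be 0.\<close>
definition Econc :: "(real \<Rightarrow> complex) set \<Rightarrow> real \<Rightarrow> real" where
  "Econc U z = Sup (insert 0 {normOn (- {-z<..<z}) (FT f) | f. f \<in> U \<and> L2norm f = 1})"

definition fourier_frame :: "(int \<Rightarrow> real) \<Rightarrow> bool" where
  "fourier_frame \<omega> \<longleftrightarrow> (\<exists>A B. 0 < A \<and> A \<le> B \<and>
     (\<forall>f. inH f \<longrightarrow>
        (\<lambda>n. (cmod (FT f (\<omega> n)))\<^sup>2) summable_on UNIV \<and>
        A * (L2norm f)\<^sup>2 \<le> (\<Sum>\<^sub>\<infinity>n. (cmod (FT f (\<omega> n)))\<^sup>2) \<and>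
        (\<Sum>\<^sub>\<infinity>n. (cmod (FT f (\<omega> n)))\<^sup>2) \<le> B * (L2norm f)\<^sup>2))"

definition Etilde :: "(int \<Rightarrow> real) \<Rightarrow> (real \<Rightarrow> complex) set \<Rightarrow> nat \<Rightarrow> real" where
  "Etilde \<omega> U N = sqrt (Sup (insert 0
     {(\<Sum>\<^sub>\<infinity>n\<in>{n. \<bar>n\<bar> > int N}. (cmod (FT f (\<omega> n)))\<^sup>2) | f. f \<in> U \<and> L2norm f = 1}))"

end

theory Submission
  imports Defs
begin


lemma L2_CS:
  fixes u v :: "'a \<Rightarrow> real"
  assumes [measurable]: "u \<in> borel_measurable M" "v \<in> borel_measurable M"
    and iu: "integrable M (\<lambda>x. (u x)\<^sup>2)" and iv: "integrable M (\<lambda>x. (v x)\<^sup>2)"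
    and nu: "\<And>x. u x \<ge> 0" and nv: "\<And>x. v x \<ge> 0"
  shows "integrable M (\<lambda>x. u x * v x)"
    "(LINT x|M. u x * v x) \<le> sqrt (LINT x|M. (u x)\<^sup>2) * sqrt (LINT x|M. (v x)\<^sup>2)"
proof -
  show i: "integrable M (\<lambda>x. u x * v x)"
  proof (rule Bochner_Integration.integrable_bound[of _ "\<lambda>x. (u x)\<^sup>2 + (v x)\<^sup>2"])
    show "integrable M (\<lambda>x. (u x)\<^sup>2 + (v x)\<^sup>2)" using iu iv by simp
    show "AE x in M. norm (u x * v x) \<le> norm ((u x)\<^sup>2 + (v x)\<^sup>2)"
    proof (rule AE_I2)
      fix x
      have "2 * u x * v x \<le> (u x)\<^sup>2 + (v x)\<^sup>2" by (rule sum_squares_bound)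
      moreover have "0 \<le> u x * v x" using nu nv by simp
      ultimately show "norm (u x * v x) \<le> norm ((u x)\<^sup>2 + (v x)\<^sup>2)"
        by simp
    qed
  qed simp
  have e1: "ennreal (LINT x|M. u x * v x) = (\<integral>\<^sup>+x. ennreal (u x) * ennreal (v x) \<partial>M)"
    using i nu nv by (simp add: nn_integral_eq_integral ennreal_mult[symmetric])
  have e2: "ennreal (LINT x|M. (u x)\<^sup>2) = (\<integral>\<^sup>+x. ennreal (u x) ^ 2 \<partial>M)"
  proof -
    have "(\<integral>\<^sup>+x. ennreal (u x) ^ 2 \<partial>M) = (\<integral>\<^sup>+x. ennreal ((u x)\<^sup>2) \<partial>M)"
      by (simp add: ennreal_power nu)
    also have "\<dots> = ennreal (LINT x|M. (u x)\<^sup>2)"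
      by (rule nn_integral_eq_integral) (use iu in auto)
    finally show ?thesis by simp
  qed
  have e3: "ennreal (LINT x|M. (v x)\<^sup>2) = (\<integral>\<^sup>+x. ennreal (v x) ^ 2 \<partial>M)"
  proof -
    have "(\<integral>\<^sup>+x. ennreal (v x) ^ 2 \<partial>M) = (\<integral>\<^sup>+x. ennreal ((v x)\<^sup>2) \<partial>M)"
      by (simp add: ennreal_power nv)
    also have "\<dots> = ennreal (LINT x|M. (v x)\<^sup>2)"
      by (rule nn_integral_eq_integral) (use iv in auto)
    finally show ?thesis by simp
  qed
  have "(ennreal (LINT x|M. u x * v x))\<^sup>2 \<le> ennreal (LINT x|M. (u x)\<^sup>2) * ennreal (LINT x|M. (v x)\<^sup>2)"
    unfolding e1 e2 e3 by (rule Cauchy_Schwarz_nn_integral) auto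
  moreover have "0 \<le> (LINT x|M. u x * v x)" using nu nv by (intro integral_nonneg_AE) auto
  moreover have "0 \<le> (LINT x|M. (u x)\<^sup>2)" "0 \<le> (LINT x|M. (v x)\<^sup>2)" by auto
  ultimately have "(LINT x|M. u x * v x)\<^sup>2 \<le> (LINT x|M. (u x)\<^sup>2) * (LINT x|M. (v x)\<^sup>2)"
    by (metis ennreal_le_iff ennreal_mult ennreal_power zero_le_power2 mult_nonneg_nonneg)
  then show "(LINT x|M. u x * v x) \<le> sqrt (LINT x|M. (u x)\<^sup>2) * sqrt (LINT x|M. (v x)\<^sup>2)"
    by (metis real_le_rsqrt real_sqrt_mult)
qed

definition sqi :: "'a measure \<Rightarrow> ('a \<Rightarrow> complex) \<Rightarrow> bool" where
  "sqi M u \<longleftrightarrow> u \<in> borel_measurable M \<and> integrable M (\<lambda>x. (cmod (u x))\<^sup>2)"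

definition QQ :: "'a measure \<Rightarrow> ('a \<Rightarrow> complex) \<Rightarrow> real" where
  "QQ M u = sqrt (LINT x|M. (cmod (u x))\<^sup>2)"

lemma QQ_nonneg: "QQ M u \<ge> 0"
  unfolding QQ_def by simp

lemma L2_tri:
  assumes "sqi M u" "sqi M v"
  shows "sqi M (\<lambda>x. u x + v x)" "QQ M (\<lambda>x. u x + v x) \<le> QQ M u + QQ M v"
proof -
  have [measurable]: "u \<in> borel_measurable M" "v \<in> borel_measurable M"
    and iu: "integrable M (\<lambda>x. (cmod (u x))\<^sup>2)" and iv: "integrable M (\<lambda>x. (cmod (v x))\<^sup>2)"
    using assms by (auto simp: sqi_def)
  have b: "(cmod (u x + v x))\<^sup>2 \<le> ((cmod (u x)) + cmod (v x))\<^sup>2" for x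
    by (simp add: norm_triangle_ineq power_mono)
  have b2: "((cmod (u x)) + cmod (v x))\<^sup>2 = (cmod (u x))\<^sup>2 + (cmod (v x))\<^sup>2 + 2 * (cmod (u x) * cmod (v x))" for x
    by (simp add: power2_sum)
  note cs = L2_CS[of "\<lambda>x. cmod (u x)" M "\<lambda>x. cmod (v x)", OF _ _ iu iv]
  have iuv: "integrable M (\<lambda>x. cmod (u x) * cmod (v x))" using cs by auto
  have isum: "integrable M (\<lambda>x. ((cmod (u x)) + cmod (v x))\<^sup>2)"
    unfolding b2 using iu iv iuv by simp
  have iw: "integrable M (\<lambda>x. (cmod (u x + v x))\<^sup>2)"
  proof (rule Bochner_Integration.integrable_bound[OF isum])
    show "AE x in M. norm ((cmod (u x + v x))\<^sup>2) \<le> norm (((cmod (u x)) + cmod (v x))\<^sup>2)"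
      using b by auto
  qed measurable
  then show "sqi M (\<lambda>x. u x + v x)" by (simp add: sqi_def)
  have "(LINT x|M. (cmod (u x + v x))\<^sup>2) \<le> (LINT x|M. ((cmod (u x)) + cmod (v x))\<^sup>2)"
    by (rule integral_mono[OF iw isum]) (rule b)
  also have "\<dots> = (LINT x|M. (cmod (u x))\<^sup>2) + (LINT x|M. (cmod (v x))\<^sup>2) + 2 * (LINT x|M. cmod (u x) * cmod (v x))"
    unfolding b2 using iu iv iuv by simp
  also have "\<dots> \<le> (QQ M u)\<^sup>2 + (QQ M v)\<^sup>2 + 2 * (QQ M u * QQ M v)"
    using cs by (simp add: QQ_def)
  also have "\<dots> = (QQ M u + QQ M v)\<^sup>2" by (simp add: power2_sum)
  finally show "QQ M (\<lambda>x. u x + v x) \<le> QQ M u + QQ M v"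
    unfolding QQ_def[of M "\<lambda>x. u x + v x"]
    by (metis QQ_nonneg add_nonneg_nonneg real_sqrt_le_iff real_sqrt_abs abs_of_nonneg)
qed

lemma L2_scale:
  assumes "sqi M u"
  shows "sqi M (\<lambda>x. c * u x)" "QQ M (\<lambda>x. c * u x) = cmod c * QQ M u"
proof -
  have [measurable]: "u \<in> borel_measurable M" and iu: "integrable M (\<lambda>x. (cmod (u x))\<^sup>2)"
    using assms by (auto simp: sqi_def)
  show "sqi M (\<lambda>x. c * u x)" using iu by (simp add: sqi_def norm_mult power_mult_distrib)
  show "QQ M (\<lambda>x. c * u x) = cmod c * QQ M u"
    by (simp add: QQ_def norm_mult power_mult_distrib real_sqrt_mult)
qed

lemma L2_zero: "sqi M (\<lambda>x. 0)" "QQ M (\<lambda>x. 0) = 0"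
  by (auto simp: sqi_def QQ_def)

lemma L2_sum:
  assumes "finite S" "\<And>i. i \<in> S \<Longrightarrow> sqi M (u i)"
  shows "sqi M (\<lambda>x. \<Sum>i\<in>S. u i x) \<and> QQ M (\<lambda>x. \<Sum>i\<in>S. u i x) \<le> (\<Sum>i\<in>S. QQ M (u i))"
  using assms
proof (induction S rule: finite_induct)
  case empty then show ?case using L2_zero[of M] by simp
next
  case (insert a S)
  then have h: "sqi M (\<lambda>x. \<Sum>i\<in>S. u i x)" "QQ M (\<lambda>x. \<Sum>i\<in>S. u i x) \<le> (\<Sum>i\<in>S. QQ M (u i))"
    and ua: "sqi M (u a)" by auto
  have e: "(\<lambda>x. \<Sum>i\<in>insert a S. u i x) = (\<lambda>x. u a x + (\<Sum>i\<in>S. u i x))"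
    using insert by simp
  show ?case unfolding e using L2_tri[OF ua h(1)] h(2) insert by simp
qed



lemma sum_restrict_sub:
  assumes "finite I" "S \<subseteq> I"
  shows "(\<Sum>n\<in>I. if n \<in> S then g n else 0) = (\<Sum>n\<in>S. g n)"
proof -
  have "(\<Sum>n\<in>I. if n \<in> S then g n else 0) = sum g (I \<inter> S)"
    using assms(1) by (rule sum.inter_restrict[symmetric])
  also have "I \<inter> S = S" using assms(2) by auto
  finally show ?thesis .
qed

lemma riesz_sub:
  assumes rb: "riesz_basis_consts \<phi> I d1 d2" and fin: "finite I" and S: "S \<subseteq> I"
  shows "d1 * (\<Sum>n\<in>S. (cmod (a n))\<^sup>2) \<le> (L2norm (\<lambda>x. \<Sum>n\<in>S. a n * \<phi> n x))\<^sup>2"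
    "(L2norm (\<lambda>x. \<Sum>n\<in>S. a n * \<phi> n x))\<^sup>2 \<le> d2 * (\<Sum>n\<in>S. (cmod (a n))\<^sup>2)"
proof -
  define b where "b n = (if n \<in> S then a n else 0)" for n
  have e1: "(\<lambda>x. \<Sum>n\<in>I. b n * \<phi> n x) = (\<lambda>x. \<Sum>n\<in>S. a n * \<phi> n x)"
  proof
    fix x
    have "(\<Sum>n\<in>I. b n * \<phi> n x) = (\<Sum>n\<in>I. if n \<in> S then a n * \<phi> n x else 0)"
      by (rule sum.cong) (auto simp: b_def)
    then show "(\<Sum>n\<in>I. b n * \<phi> n x) = (\<Sum>n\<in>S. a n * \<phi> n x)"
      using sum_restrict_sub[OF fin S] by simp
  qed
  have e2: "(\<Sum>n\<in>I. (cmod (b n))\<^sup>2) = (\<Sum>n\<in>S. (cmod (a n))\<^sup>2)"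
  proof -
    have "(\<Sum>n\<in>I. (cmod (b n))\<^sup>2) = (\<Sum>n\<in>I. if n \<in> S then (cmod (a n))\<^sup>2 else 0)"
      by (rule sum.cong) (auto simp: b_def)
    then show ?thesis using sum_restrict_sub[OF fin S] by simp
  qed
  from rb have "d1 * (\<Sum>n\<in>I. (cmod (b n))\<^sup>2) \<le> (L2norm (\<lambda>x. \<Sum>n\<in>I. b n * \<phi> n x))\<^sup>2 \<and>
        (L2norm (\<lambda>x. \<Sum>n\<in>I. b n * \<phi> n x))\<^sup>2 \<le> d2 * (\<Sum>n\<in>I. (cmod (b n))\<^sup>2)"
    unfolding riesz_basis_consts_def by blast
  then show "d1 * (\<Sum>n\<in>S. (cmod (a n))\<^sup>2) \<le> (L2norm (\<lambda>x. \<Sum>n\<in>S. a n * \<phi> n x))\<^sup>2"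
    "(L2norm (\<lambda>x. \<Sum>n\<in>S. a n * \<phi> n x))\<^sup>2 \<le> d2 * (\<Sum>n\<in>S. (cmod (a n))\<^sup>2)"
    unfolding e1 e2 by auto
qed

lemma L2norm_QQ: "L2norm f = QQ lborel f"
  by (simp add: L2norm_def QQ_def)

lemma QQ_scale: "QQ M (\<lambda>x. c * u x) = cmod c * QQ M u"
  by (simp add: QQ_def norm_mult power_mult_distrib real_sqrt_mult)

lemma QQ_lin_sum:
  assumes "finite S" "\<And>n. n \<in> S \<Longrightarrow> sqi M (\<Psi> n)"
  shows "sqi M (\<lambda>x. \<Sum>n\<in>S. a n * \<Psi> n x)"
    "QQ M (\<lambda>x. \<Sum>n\<in>S. a n * \<Psi> n x) \<le> (\<Sum>n\<in>S. cmod (a n) * QQ M (\<Psi> n))"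
proof -
  have h: "\<And>n. n \<in> S \<Longrightarrow> sqi M (\<lambda>x. a n * \<Psi> n x)" using assms(2) L2_scale by blast
  from L2_sum[of S M "\<lambda>n x. a n * \<Psi> n x", OF assms(1) h]
  show "sqi M (\<lambda>x. \<Sum>n\<in>S. a n * \<Psi> n x)"
    "QQ M (\<lambda>x. \<Sum>n\<in>S. a n * \<Psi> n x) \<le> (\<Sum>n\<in>S. cmod (a n) * QQ M (\<Psi> n))"
    by (auto simp: QQ_scale)
qed

lemma piece_bound:
  fixes \<Psi> :: "nat \<Rightarrow> 'b \<Rightarrow> complex"
  assumes fin: "finite I" and rb: "riesz_basis_consts \<phi> I d1 d2" and S: "S \<subseteq> I"
    and Vd: "\<And>a. V (\<lambda>x. \<Sum>n\<in>S. a n * \<phi> n x) = QQ M (\<lambda>\<omega>. \<Sum>n\<in>S. a n * \<Psi> n \<omega>)"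
    and Eb: "\<And>f. f \<in> fspan \<phi> S \<Longrightarrow> L2norm f = 1 \<Longrightarrow> V f \<le> E"
  shows "QQ M (\<lambda>\<omega>. \<Sum>n\<in>S. a n * \<Psi> n \<omega>) \<le> \<bar>E\<bar> * sqrt (d2 * (\<Sum>n\<in>S. (cmod (a n))\<^sup>2))"
proof -
  have d1: "d1 > 0" and d12: "d1 \<le> d2" using rb by (auto simp: riesz_basis_consts_def)
  define L where "L = L2norm (\<lambda>x. \<Sum>n\<in>S. a n * \<phi> n x)"
  define s where "s = (\<Sum>n\<in>S. (cmod (a n))\<^sup>2)"
  have s0: "s \<ge> 0" unfolding s_def by (simp add: sum_nonneg)
  have L0: "L \<ge> 0" unfolding L_def L2norm_QQ by (rule QQ_nonneg)
  have r1: "d1 * s \<le> L\<^sup>2" and r2: "L\<^sup>2 \<le> d2 * s"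
    using riesz_sub[OF rb fin S, of a] by (auto simp: L_def s_def)
  have Ls: "L \<le> sqrt (d2 * s)" using r2 L0 by (simp add: real_le_rsqrt)
  show ?thesis
  proof (cases "L = 0")
    case True
    then have "s = 0" using r1 d1 s0 by (simp add: mult_le_0_iff) 
    then have "\<forall>n\<in>S. a n = 0" using S fin unfolding s_def
      by (subst (asm) sum_nonneg_eq_0_iff) (auto intro: finite_subset)
    then have "(\<lambda>\<omega>. \<Sum>n\<in>S. a n * \<Psi> n \<omega>) = (\<lambda>\<omega>. 0)" by simp
    then show ?thesis using d1 d12 by (simp add: QQ_def sum_nonneg)
  next
    case False
    then have Lp: "L > 0" using L0 by simp
    define c where "c = complex_of_real (1 / L)"
    define f where "f = (\<lambda>x. \<Sum>n\<in>S. (c * a n) * \<phi> n x)"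
    have fsp: "f \<in> fspan \<phi> S" unfolding f_def fspan_def by (rule CollectI, rule exI[of _ "\<lambda>n. c * a n"]) simp
    have "f = (\<lambda>x. c * (\<Sum>n\<in>S. a n * \<phi> n x))"
      unfolding f_def by (simp add: sum_distrib_left mult.assoc)
    then have "L2norm f = cmod c * L" by (simp add: L2norm_QQ QQ_scale L_def)
    also have "\<dots> = 1" using Lp by (simp add: c_def norm_divide)
    finally have "V f \<le> E" using Eb fsp by blast
    also have "V f = QQ M (\<lambda>\<omega>. \<Sum>n\<in>S. (c * a n) * \<Psi> n \<omega>)" unfolding f_def by (rule Vd)
    also have "(\<lambda>\<omega>. \<Sum>n\<in>S. (c * a n) * \<Psi> n \<omega>) = (\<lambda>\<omega>. c * (\<Sum>n\<in>S. a n * \<Psi> n \<omega>))"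
      by (simp add: sum_distrib_left mult.assoc)
    finally have "cmod c * QQ M (\<lambda>\<omega>. \<Sum>n\<in>S. a n * \<Psi> n \<omega>) \<le> E"
      by (simp only: QQ_scale)
    then have "QQ M (\<lambda>\<omega>. \<Sum>n\<in>S. a n * \<Psi> n \<omega>) / L \<le> E"
      using Lp by (simp add: c_def norm_divide)
    then have "QQ M (\<lambda>\<omega>. \<Sum>n\<in>S. a n * \<Psi> n \<omega>) \<le> E * L" using Lp by (simp add: divide_le_eq)
    moreover have "E \<ge> 0"
      using \<open>QQ M _ / L \<le> E\<close> Lp QQ_nonneg by (smt (verit) divide_nonneg_pos)
    ultimately show ?thesis using Ls
      by (smt (verit) mult_left_mono abs_of_nonneg s_def)
  qed
qed

lemma CS_sqrt:
  fixes x y :: "nat \<Rightarrow> real"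
  assumes "\<And>i. x i \<ge> 0" "\<And>i. y i \<ge> 0"
  shows "(\<Sum>i\<in>R. x i * y i) \<le> sqrt (\<Sum>i\<in>R. (x i)\<^sup>2) * sqrt (\<Sum>i\<in>R. (y i)\<^sup>2)"
proof -
  have "(\<Sum>i\<in>R. x i * y i)\<^sup>2 \<le> (\<Sum>i\<in>R. (x i)\<^sup>2) * (\<Sum>i\<in>R. (y i)\<^sup>2)"
    by (rule Cauchy_Schwarz_ineq_sum)
  moreover have "(\<Sum>i\<in>R. x i * y i) \<ge> 0" using assms by (simp add: sum_nonneg)
  ultimately show ?thesis by (metis real_le_rsqrt real_sqrt_mult)
qed

lemma core:
  fixes \<Psi> :: "nat \<Rightarrow> 'b \<Rightarrow> complex" and E :: "nat \<Rightarrow> real"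
  assumes fin: "finite I" and rb: "riesz_basis_consts \<phi> I d1 d2"
    and disj: "\<forall>i\<in>{1..r}. \<forall>j\<in>{1..r}. i \<noteq> j \<longrightarrow> P i \<inter> P j = {}"
    and un: "(\<Union>i\<in>{1..r}. P i) = I"
    and sq: "\<And>n. n \<in> I \<Longrightarrow> sqi M (\<Psi> n)"
    and Vd: "\<And>S a. S \<subseteq> I \<Longrightarrow> V (\<lambda>x. \<Sum>n\<in>S. a n * \<phi> n x) = QQ M (\<lambda>\<omega>. \<Sum>n\<in>S. a n * \<Psi> n \<omega>)"
    and Eb: "\<And>i f. i \<in> {1..r} \<Longrightarrow> f \<in> fspan \<phi> (P i) \<Longrightarrow> L2norm f = 1 \<Longrightarrow> V f \<le> E i"
    and f: "f \<in> fspan \<phi> I" "L2norm f = 1"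
  shows "V f \<le> sqrt (d2 / d1 * (\<Sum>i=1..r. (E i)\<^sup>2))"
proof -
  define R where "R = {1..r}"
  have finR: "finite R" by (simp add: R_def)
  have d1: "d1 > 0" and d12: "d1 \<le> d2" using rb by (auto simp: riesz_basis_consts_def)
  obtain a where fa: "f = (\<lambda>x. \<Sum>n\<in>I. a n * \<phi> n x)" using f(1) unfolding fspan_def by blast
  have PI: "P i \<subseteq> I" if "i \<in> R" for i using UN_upper[of i "{1..r}" P] that un by (simp add: R_def)
  have finP: "\<forall>i\<in>R. finite (P i)" using PI fin finite_subset by metis
  have disjR: "\<forall>i\<in>R. \<forall>j\<in>R. i \<noteq> j \<longrightarrow> P i \<inter> P j = {}" using disj by (simp add: R_def)
  have UI: "\<Union>(P ` R) = I" using un R_def by simp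
  have sumsplit: "(\<Sum>n\<in>I. h n) = (\<Sum>i\<in>R. \<Sum>n\<in>P i. h n)" for h :: "nat \<Rightarrow> 'c::comm_monoid_add"
    using sum.UNION_disjoint[OF finR finP disjR, of h] UI by simp
  define g where "g i = (\<lambda>\<omega>. \<Sum>n\<in>P i. a n * \<Psi> n \<omega>)" for i
  define s where "s i = (\<Sum>n\<in>P i. (cmod (a n))\<^sup>2)" for i
  have s0: "s i \<ge> 0" for i unfolding s_def by (simp add: sum_nonneg)
  have sqg: "sqi M (g i)" if "i \<in> R" for i
    unfolding g_def by (rule QQ_lin_sum(1)) (use finP sq PI that in auto)
  have "V f = QQ M (\<lambda>\<omega>. \<Sum>n\<in>I. a n * \<Psi> n \<omega>)" unfolding fa by (rule Vd) simp
  also have "(\<lambda>\<omega>. \<Sum>n\<in>I. a n * \<Psi> n \<omega>) = (\<lambda>\<omega>. \<Sum>i\<in>R. g i \<omega>)"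
    unfolding g_def by (rule ext, rule sumsplit)
  also have "QQ M (\<lambda>\<omega>. \<Sum>i\<in>R. g i \<omega>) \<le> (\<Sum>i\<in>R. QQ M (g i))"
    using L2_sum[of R M g, OF finR sqg] by blast
  also have "\<dots> \<le> (\<Sum>i\<in>R. \<bar>E i\<bar> * sqrt (d2 * s i))"
  proof (rule sum_mono)
    fix i assume i: "i \<in> R"
    show "QQ M (g i) \<le> \<bar>E i\<bar> * sqrt (d2 * s i)"
      unfolding g_def s_def
    proof (rule piece_bound[OF fin rb PI[OF i]])
      show "V (\<lambda>x. \<Sum>n\<in>P i. b n * \<phi> n x) = QQ M (\<lambda>\<omega>. \<Sum>n\<in>P i. b n * \<Psi> n \<omega>)" for b
        by (rule Vd[OF PI[OF i]])
      show "V f \<le> E i" if "f \<in> fspan \<phi> (P i)" "L2norm f = 1" for f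
        using Eb[of i f] that i unfolding R_def by blast
    qed
  qed
  also have "\<dots> \<le> sqrt (\<Sum>i\<in>R. \<bar>E i\<bar>\<^sup>2) * sqrt (\<Sum>i\<in>R. (sqrt (d2 * s i))\<^sup>2)"
    by (rule CS_sqrt) (use d1 d12 s0 in simp_all)
  also have "(\<Sum>i\<in>R. (sqrt (d2 * s i))\<^sup>2) = d2 * (\<Sum>i\<in>R. s i)"
    using d1 d12 s0 by (simp add: sum_distrib_left)
  also have "(\<Sum>i\<in>R. s i) = (\<Sum>n\<in>I. (cmod (a n))\<^sup>2)" unfolding s_def by (rule sumsplit[symmetric])
  finally have A: "V f \<le> sqrt (\<Sum>i\<in>R. \<bar>E i\<bar>\<^sup>2) * sqrt (d2 * (\<Sum>n\<in>I. (cmod (a n))\<^sup>2))" .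
  have B: "(\<Sum>n\<in>I. (cmod (a n))\<^sup>2) \<le> 1 / d1"
  proof -
    have "d1 * (\<Sum>n\<in>I. (cmod (a n))\<^sup>2) \<le> (L2norm f)\<^sup>2"
      using riesz_sub(1)[OF rb fin order_refl, of a] fa by simp
    then show ?thesis using f(2) d1 by (simp add: field_simps)
  qed
  have "sqrt (d2 * (\<Sum>n\<in>I. (cmod (a n))\<^sup>2)) \<le> sqrt (d2 * (1 / d1))"
    using B d1 d12 by (intro real_sqrt_le_mono mult_left_mono) auto
  then have "V f \<le> sqrt (\<Sum>i\<in>R. \<bar>E i\<bar>\<^sup>2) * sqrt (d2 * (1 / d1))"
    by (rule order_trans[OF A mult_left_mono]) (auto simp: sum_nonneg)
  also have "\<dots> = sqrt (d2 / d1 * (\<Sum>i=1..r. (E i)\<^sup>2))"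
    by (simp add: R_def real_sqrt_mult[symmetric] mult.commute)
  finally show ?thesis .
qed



lemma orth:
  fixes m :: int
  shows "(LINT x|lborel. indicator {0..1::real} x *\<^sub>R cis (2*pi*m*x)) = (if m = 0 then 1 else 0)"
proof (cases "m = 0")
  case True
  then show ?thesis by (simp add: indicator_scaleR_eq_if)
next
  case False
  define F where "F x = cis (2*pi*m*x) / (\<i> * (2*pi*m))" for x :: real
  have d: "(F has_vector_derivative cis (2*pi*m*x)) (at x within A)" for x A
  proof -
    have "((\<lambda>x. cis (2*pi*m*x)) has_derivative (\<lambda>t. (t * (2*pi*m)) *\<^sub>R (\<i> * cis (2*pi*m*x)))) (at x within A)"
      by (rule has_derivative_cis) (auto intro!: derivative_eq_intros)
    then have "((\<lambda>x. cis (2*pi*m*x) / (\<i> * (2*pi*m))) has_derivative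
        (\<lambda>t. (t * (2*pi*m)) *\<^sub>R (\<i> * cis (2*pi*m*x)) / (\<i> * (2*pi*m)))) (at x within A)"
      using False by (intro derivative_eq_intros) auto
    moreover have "(\<lambda>t. (t * (2*pi*m)) *\<^sub>R (\<i> * cis (2*pi*m*x)) / (\<i> * (2*pi*m))) = (\<lambda>t. t *\<^sub>R cis (2*pi*m*x))"
      using False by (auto simp: scaleR_conv_of_real field_simps)
    ultimately show ?thesis unfolding has_vector_derivative_def F_def by simp
  qed
  have "(LBINT x=ereal 0..ereal 1. cis (2*pi*m*x)) = F 1 - F 0"
    by (rule interval_integral_FTC_finite[where F=F and f="\<lambda>x. cis (2*pi*m*x)" and a=0 and b=1])
       (auto intro!: continuous_intros d)
  also have "F 1 - F 0 = 0"
  proof -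
    have "cis (2*pi*m*1) = 1" by (simp add: cis_multiple_2pi)
    then show ?thesis by (simp add: F_def)
  qed
  finally have "(LBINT x:{0..1}. cis (2*pi*m*x)) = 0" by (simp add: interval_integral_Icc)
  then show ?thesis using False by (simp add: set_lebesgue_integral_def)
qed

lemma inH_L1:
  assumes "inH g"
  shows "integrable lborel g"
proof -
  have [measurable]: "g \<in> borel_measurable lborel" and i2: "integrable lborel (\<lambda>x. (cmod (g x))\<^sup>2)"
    and z: "\<And>x. x \<notin> {0..1} \<Longrightarrow> g x = 0"
    using assms by (auto simp: inH_def)
  have i1: "integrable lborel (\<lambda>x. indicator {0..1::real} x :: real)"
    by (simp add: integrable_indicator_iff)
  show ?thesis
  proof (rule Bochner_Integration.integrable_bound[of _ "\<lambda>x. indicator {0..1::real} x + (cmod (g x))\<^sup>2"])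
    show "integrable lborel (\<lambda>x. indicator {0..1::real} x + (cmod (g x))\<^sup>2)" using i1 i2 by simp
    show "AE x in lborel. norm (g x) \<le> norm (indicator {0..1::real} x + (cmod (g x))\<^sup>2)"
    proof (rule AE_I2)
      fix x
      show "norm (g x) \<le> norm (indicator {0..1::real} x + (cmod (g x))\<^sup>2)"
      proof (cases "x \<in> {0..1}")
        case True
        have "0 \<le> (cmod (g x) - 1)\<^sup>2" by simp
        then have "2 * cmod (g x) \<le> 1 + (cmod (g x))\<^sup>2" by (simp add: power2_diff)
        then have "cmod (g x) \<le> 1 + (cmod (g x))\<^sup>2" using norm_ge_zero[of "g x"] by linarith
        then show ?thesis using True by simp
      next
        case False then show ?thesis using z by simp
      qed
    qed
  qed simp
qed

lemma FT_meas:
  assumes [measurable]: "g \<in> borel_measurable lborel"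
  shows "FT g \<in> borel_measurable lborel"
proof -
  have "continuous_on UNIV (\<lambda>p::real\<times>real. cis (- (2 * pi * fst p * snd p)))"
    by (intro continuous_intros)
  then have "(\<lambda>p::real\<times>real. cis (- (2 * pi * fst p * snd p))) \<in> borel_measurable borel"
    by (rule borel_measurable_continuous_onI)
  then have [measurable]: "(\<lambda>p::real\<times>real. cis (- (2 * pi * fst p * snd p))) \<in> borel_measurable (lborel \<Otimes>\<^sub>M lborel)"
    by (simp add: measurable_cong_sets[OF sets_pair_measure_cong[OF sets_lborel sets_lborel] refl] borel_prod)
  have mp: "(\<lambda>p. g (snd p) * cis (- (2 * pi * fst p * snd p))) \<in> borel_measurable (lborel \<Otimes>\<^sub>M lborel)"
    by measurable
  have "(\<lambda>w. LINT x|lborel. g x * cis (- 2 * pi * w * x)) \<in> borel_measurable lborel"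
    by (rule lborel.borel_measurable_lebesgue_integral) (simp add: split_beta' mp)
  then show ?thesis unfolding FT_def[abs_def] .
qed

lemma int_ind_bounded:
  fixes f :: "real \<Rightarrow> 'a::{banach,second_countable_topology}"
  assumes [measurable]: "f \<in> borel_measurable lborel" and b: "\<And>x. norm (f x) \<le> C"
  shows "integrable lborel (\<lambda>x. indicator {0..1::real} x *\<^sub>R f x)"
proof (rule Bochner_Integration.integrable_bound[of _ "\<lambda>x. C * indicator {0..1::real} x"])
  show "integrable lborel (\<lambda>x. C * indicator {0..1::real} x)"
    by (intro integrable_mult_right) (simp add: integrable_indicator_iff)
  show "AE x in lborel. norm (indicator {0..1::real} x *\<^sub>R f x) \<le> norm (C * indicator {0..1::real} x)"
  proof (rule AE_I2)
    fix x
    have "0 \<le> C" using b[of x] norm_ge_zero order_trans by blast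
    then show "norm (indicator {0..1::real} x *\<^sub>R f x) \<le> norm (C * indicator {0..1::real} x)"
      using b[of x] by (auto simp: indicator_def)
  qed
qed simp

lemma int_mult_L1:
  fixes g u :: "real \<Rightarrow> complex"
  assumes "integrable lborel g" and [measurable]: "u \<in> borel_measurable lborel" and b: "\<And>x. cmod (u x) \<le> C"
  shows "integrable lborel (\<lambda>x. g x * u x)"
proof (rule Bochner_Integration.integrable_bound[of _ "\<lambda>x. C * cmod (g x)"])
  show "integrable lborel (\<lambda>x. C * cmod (g x))" using assms(1) by simp
  have [measurable]: "g \<in> borel_measurable lborel" using assms(1) by simp
  show "(\<lambda>x. g x * u x) \<in> borel_measurable lborel" by measurable
  show "AE x in lborel. norm (g x * u x) \<le> norm (C * cmod (g x))"
  proof (rule AE_I2)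
    fix x
    have "0 \<le> C" using b[of x] norm_ge_zero order_trans by blast
    then show "norm (g x * u x) \<le> norm (C * cmod (g x))"
      using b[of x] by (simp add: norm_mult) (metis mult.commute mult_left_mono norm_ge_zero)
  qed
qed

lemma orth2:
  fixes k l :: int
  shows "(LINT x|lborel. indicator {0..1::real} x *\<^sub>R (cis (2*pi*(t + real_of_int k)*x) * cnj (cis (2*pi*(t + real_of_int l)*x))))
     = (if k = l then 1 else 0)"
proof -
  have "cis (2*pi*(t + real_of_int k)*x) * cnj (cis (2*pi*(t + real_of_int l)*x)) = cis (2*pi*real_of_int (k - l)*x)" for x
    by (simp add: cis_cnj cis_mult algebra_simps)
  then show ?thesis using orth[of "k - l"] by simp
qed

lemma bessel:
  assumes gH: "inH g" and finF: "finite F"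
  shows "(\<Sum>k\<in>F. (cmod (FT g (t + real_of_int k)))\<^sup>2) \<le> (LINT x|lborel. (cmod (g x))\<^sup>2)"
proof -
  have [measurable]: "g \<in> borel_measurable lborel" and i2: "integrable lborel (\<lambda>x. (cmod (g x))\<^sup>2)"
    and z: "\<And>x. x \<notin> {0..1} \<Longrightarrow> g x = 0"
    using gH by (auto simp: inH_def)
  have iL1: "integrable lborel g" by (rule inH_L1[OF gH])
  define c where "c k = FT g (t + real_of_int k)" for k
  define e where "e k x = cis (2*pi*(t + real_of_int k)*x)" for k x
  define H where "H x = (\<Sum>k\<in>F. c k * e k x)" for x
  define h where "h x = indicator {0..1::real} x *\<^sub>R H x" for x
  define Sc where "Sc = (\<Sum>k\<in>F. (cmod (c k))\<^sup>2)"
  define G where "G = (LINT x|lborel. (cmod (g x))\<^sup>2)"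
  have ce: "continuous_on UNIV (e k)" for k unfolding e_def by (intro continuous_intros)
  have em[measurable]: "e k \<in> borel_measurable lborel" for k
    using borel_measurable_continuous_onI[OF ce] by simp
  have cce: "continuous_on UNIV (\<lambda>x. cnj (e k x))" for k unfolding e_def by (intro continuous_intros)
  have ecnjm[measurable]: "(\<lambda>x. cnj (e k x)) \<in> borel_measurable lborel" for k
    using borel_measurable_continuous_onI[OF cce] by simp
  have en: "cmod (e k x) = 1" for k x by (simp add: e_def)
  have Hm[measurable]: "H \<in> borel_measurable lborel" unfolding H_def by measurable
  have hm[measurable]: "h \<in> borel_measurable lborel" unfolding h_def by measurable
  define C0 where "C0 = (\<Sum>k\<in>F. cmod (c k))"
  have Hb: "cmod (H x) \<le> C0" for x
  proof -
    have "cmod (H x) \<le> (\<Sum>k\<in>F. cmod (c k * e k x))" unfolding H_def by (rule norm_sum)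
    also have "\<dots> = C0" by (simp add: C0_def norm_mult en)
    finally show ?thesis .
  qed
  have ih: "integrable lborel h" unfolding h_def by (rule int_ind_bounded[OF Hm Hb])
  have ih2: "integrable lborel (\<lambda>x. (cmod (h x))\<^sup>2)"
  proof -
    have "integrable lborel (\<lambda>x. indicator {0..1::real} x *\<^sub>R (cmod (H x))\<^sup>2)"
      by (rule int_ind_bounded[where C="C0\<^sup>2"]) (auto intro: power_mono Hb)
    moreover have "(\<lambda>x. indicator {0..1::real} x *\<^sub>R (cmod (H x))\<^sup>2) = (\<lambda>x. (cmod (h x))\<^sup>2)"
      by (auto simp: h_def indicator_def)
    ultimately show ?thesis by simp
  qed
  have c_int: "c k = (LINT x|lborel. g x * cnj (e k x))" for k
    unfolding c_def FT_def e_def by (simp add: cis_cnj)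
  have ig: "integrable lborel (\<lambda>x. g x * cnj (e k x))" for k
    by (rule int_mult_L1[OF iL1 ecnjm, where C=1]) (simp add: en)
  have "complex_of_real Sc = (\<Sum>k\<in>F. cnj (c k) * c k)"
    unfolding Sc_def of_real_sum by (simp only: complex_norm_square mult.commute)
  also have "\<dots> = (\<Sum>k\<in>F. LINT x|lborel. cnj (c k) * (g x * cnj (e k x)))"
    by (simp add: c_int[symmetric])
  also have "\<dots> = (LINT x|lborel. (\<Sum>k\<in>F. cnj (c k) * (g x * cnj (e k x))))"
    by (rule Bochner_Integration.integral_sum[where I=F and M=lborel and f="\<lambda>k x. cnj (c k) * (g x * cnj (e k x))", symmetric]) (simp add: ig)
  also have "\<dots> = (LINT x|lborel. g x * cnj (h x))"
  proof (rule Bochner_Integration.integral_cong[OF refl])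
    fix x
    have "(\<Sum>k\<in>F. cnj (c k) * (g x * cnj (e k x))) = g x * cnj (H x)"
      by (simp add: H_def sum_distrib_left algebra_simps)
    also have "\<dots> = g x * cnj (h x)" using z[of x] by (cases "x \<in> {0..1}") (auto simp: h_def)
    finally show "(\<Sum>k\<in>F. cnj (c k) * (g x * cnj (e k x))) = g x * cnj (h x)" .
  qed
  finally have S2: "complex_of_real Sc = (LINT x|lborel. g x * cnj (h x))" .
  have Sc0: "Sc \<ge> 0" unfolding Sc_def by (simp add: sum_nonneg)
  note cs = L2_CS[of "\<lambda>x. cmod (g x)" lborel "\<lambda>x. cmod (h x)", OF _ _ i2 ih2]
  have "Sc = cmod (complex_of_real Sc)" using Sc0 by simp
  also have "\<dots> \<le> (LINT x|lborel. norm (g x * cnj (h x)))" unfolding S2 by (rule integral_norm_bound)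
  also have "\<dots> = (LINT x|lborel. cmod (g x) * cmod (h x))" by (simp add: norm_mult)
  also have "\<dots> \<le> sqrt G * sqrt (LINT x|lborel. (cmod (h x))\<^sup>2)" unfolding G_def using cs by simp
  finally have S4: "Sc \<le> sqrt G * sqrt (LINT x|lborel. (cmod (h x))\<^sup>2)" .
  have iee: "integrable lborel (\<lambda>x. indicator {0..1::real} x *\<^sub>R (e k x * cnj (e l x)))" for k l
    by (rule int_ind_bounded[where C=1]) (auto simp: norm_mult en)
  have "complex_of_real (LINT x|lborel. (cmod (h x))\<^sup>2) = (LINT x|lborel. complex_of_real ((cmod (h x))\<^sup>2))"
    by (rule integral_complex_of_real[symmetric])
  also have "\<dots> = (LINT x|lborel. (\<Sum>k\<in>F. \<Sum>l\<in>F. (c k * cnj (c l)) * (indicator {0..1::real} x *\<^sub>R (e k x * cnj (e l x)))))"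
  proof (rule Bochner_Integration.integral_cong[OF refl])
    fix x
    have "complex_of_real ((cmod (h x))\<^sup>2) = h x * cnj (h x)" by (rule complex_norm_square)
    also have "\<dots> = indicator {0..1::real} x *\<^sub>R (H x * cnj (H x))"
      by (auto simp: h_def indicator_def)
    also have "H x * cnj (H x) = (\<Sum>k\<in>F. \<Sum>l\<in>F. (c k * e k x) * cnj (c l * e l x))"
      unfolding H_def cnj_sum by (rule sum_product)
    finally show "complex_of_real ((cmod (h x))\<^sup>2) = (\<Sum>k\<in>F. \<Sum>l\<in>F. (c k * cnj (c l)) * (indicator {0..1::real} x *\<^sub>R (e k x * cnj (e l x))))"
      by (simp add: scaleR_sum_right algebra_simps)
  qed
  also have "\<dots> = (\<Sum>k\<in>F. \<Sum>l\<in>F. (c k * cnj (c l)) * (LINT x|lborel. indicator {0..1::real} x *\<^sub>R (e k x * cnj (e l x))))"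
  proof -
    have "(LINT x|lborel. (\<Sum>k\<in>F. \<Sum>l\<in>F. (c k * cnj (c l)) * (indicator {0..1::real} x *\<^sub>R (e k x * cnj (e l x)))))
      = (\<Sum>k\<in>F. LINT x|lborel. (\<Sum>l\<in>F. (c k * cnj (c l)) * (indicator {0..1::real} x *\<^sub>R (e k x * cnj (e l x)))))"
      by (rule Bochner_Integration.integral_sum) (intro Bochner_Integration.integrable_sum integrable_mult_right iee)
    also have "\<dots> = (\<Sum>k\<in>F. \<Sum>l\<in>F. LINT x|lborel. (c k * cnj (c l)) * (indicator {0..1::real} x *\<^sub>R (e k x * cnj (e l x))))"
      by (intro sum.cong refl Bochner_Integration.integral_sum integrable_mult_right iee)
    also have "\<dots> = (\<Sum>k\<in>F. \<Sum>l\<in>F. (c k * cnj (c l)) * (LINT x|lborel. indicator {0..1::real} x *\<^sub>R (e k x * cnj (e l x))))"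
      by (simp only: integral_mult_right_zero)
    finally show ?thesis .
  qed
  also have "\<dots> = (\<Sum>k\<in>F. \<Sum>l\<in>F. (c k * cnj (c l)) * (if k = l then 1 else 0))"
    unfolding e_def by (simp only: orth2)
  also have "\<dots> = (\<Sum>k\<in>F. c k * cnj (c k))" using finF by (simp add: if_distrib sum.delta cong: if_cong)
  also have "\<dots> = complex_of_real Sc" unfolding Sc_def of_real_sum by (simp only: complex_norm_square)
  finally have "LINT x|lborel. (cmod (h x))\<^sup>2 = Sc" by (simp only: of_real_eq_iff)
  with S4 have "Sc \<le> sqrt G * sqrt Sc" by simp
  moreover have "G \<ge> 0" unfolding G_def by simp
  ultimately have "Sc \<le> G"
  proof (cases "Sc = 0")
    case False
    assume a: "Sc \<le> sqrt G * sqrt Sc" "G \<ge> 0"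
    have p: "sqrt Sc > 0" using False Sc0 by simp
    have "sqrt Sc * sqrt Sc \<le> sqrt G * sqrt Sc" using a(1) Sc0 by (metis real_sqrt_mult_self abs_of_nonneg)
    then have "sqrt Sc \<le> sqrt G" using p by (rule mult_right_le_imp_le)
    then show ?thesis by simp
  qed simp
  then show ?thesis unfolding Sc_def c_def G_def .
qed

lemma planch:
  assumes gH: "inH g"
  shows "FT g \<in> borel_measurable lborel" "integrable lborel (\<lambda>\<omega>. (cmod (FT g \<omega>))\<^sup>2)"
proof -
  have [measurable]: "g \<in> borel_measurable lborel" using gH by (simp add: inH_def)
  show fm[measurable]: "FT g \<in> borel_measurable lborel" by (rule FT_meas) simp
  define G where "G = (LINT x|lborel. (cmod (g x))\<^sup>2)"
  define q where "q \<omega> = (cmod (FT g \<omega>))\<^sup>2" for \<omega>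
  have fmb[measurable]: "FT g \<in> borel_measurable borel" using fm by simp
  have qm[measurable]: "q \<in> borel_measurable borel" unfolding q_def by measurable
  have q0: "q \<omega> \<ge> 0" for \<omega> by (simp add: q_def)
  have A: "(\<integral>\<^sup>+\<omega>. ennreal (q \<omega>) * indicator {real_of_int j..<real_of_int j + 1} \<omega> \<partial>lborel)
         = (\<integral>\<^sup>+t. ennreal (q (t + real_of_int j)) * indicator {0..<1::real} t \<partial>lborel)" for j :: int
  proof -
    have "(\<integral>\<^sup>+\<omega>. ennreal (q \<omega>) * indicator {real_of_int j..<real_of_int j + 1} \<omega> \<partial>lborel)
        = ennreal \<bar>1\<bar> * (\<integral>\<^sup>+t. ennreal (q (real_of_int j + 1 * t)) * indicator {real_of_int j..<real_of_int j + 1} (real_of_int j + 1 * t) \<partial>lborel)"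
      by (rule nn_integral_real_affine) auto
    also have "\<dots> = (\<integral>\<^sup>+t. ennreal (q (t + real_of_int j)) * indicator {0..<1::real} t \<partial>lborel)"
      by (auto intro!: nn_integral_cong simp: indicator_def add.commute)
    finally show ?thesis .
  qed
  have B: "(\<integral>\<^sup>+\<omega>. ennreal (q \<omega>) * indicator {- real K..real K} \<omega> \<partial>lborel) \<le> ennreal G" for K :: nat
  proof -
    define J where "J = {- int K..int K}"
    have finJ: "finite J" by (simp add: J_def)
    have pw: "ennreal (q \<omega>) * indicator {- real K..real K} \<omega>
        \<le> (\<Sum>j\<in>J. ennreal (q \<omega>) * indicator {real_of_int j..<real_of_int j + 1} \<omega>)" for \<omega>
    proof (cases "\<omega> \<in> {- real K..real K}")
      case True
      define j0 where "j0 = \<lfloor>\<omega>\<rfloor>"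
      have "j0 \<in> J" using True unfolding J_def j0_def by (auto simp: le_floor_iff floor_le_iff)
      moreover have "\<omega> \<in> {real_of_int j0..<real_of_int j0 + 1}" unfolding j0_def by simp
      ultimately have "ennreal (q \<omega>) * indicator {real_of_int j0..<real_of_int j0 + 1} \<omega>
          \<le> (\<Sum>j\<in>J. ennreal (q \<omega>) * indicator {real_of_int j..<real_of_int j + 1} \<omega>)"
        using finJ by (intro member_le_sum) auto
      then show ?thesis using True \<open>\<omega> \<in> {real_of_int j0..<real_of_int j0 + 1}\<close> by simp
    qed simp
    have "(\<integral>\<^sup>+\<omega>. ennreal (q \<omega>) * indicator {- real K..real K} \<omega> \<partial>lborel)
        \<le> (\<integral>\<^sup>+\<omega>. (\<Sum>j\<in>J. ennreal (q \<omega>) * indicator {real_of_int j..<real_of_int j + 1} \<omega>) \<partial>lborel)"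
      by (rule nn_integral_mono) (rule pw)
    also have "\<dots> = (\<Sum>j\<in>J. \<integral>\<^sup>+\<omega>. ennreal (q \<omega>) * indicator {real_of_int j..<real_of_int j + 1} \<omega> \<partial>lborel)"
      by (rule nn_integral_sum) auto
    also have "\<dots> = (\<Sum>j\<in>J. \<integral>\<^sup>+t. ennreal (q (t + real_of_int j)) * indicator {0..<1::real} t \<partial>lborel)"
      by (simp only: A)
    also have "\<dots> = (\<integral>\<^sup>+t. (\<Sum>j\<in>J. ennreal (q (t + real_of_int j)) * indicator {0..<1::real} t) \<partial>lborel)"
      by (rule nn_integral_sum[symmetric]) auto
    also have "\<dots> = (\<integral>\<^sup>+t. ennreal (\<Sum>j\<in>J. q (t + real_of_int j)) * indicator {0..<1::real} t \<partial>lborel)"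
      by (rule nn_integral_cong) (simp add: sum_distrib_right[symmetric] q0)
    also have "\<dots> \<le> (\<integral>\<^sup>+t. ennreal G * indicator {0..<1::real} t \<partial>lborel)"
    proof (rule nn_integral_mono)
      fix t
      have "(\<Sum>j\<in>J. q (t + real_of_int j)) \<le> G"
        unfolding q_def G_def by (rule bessel[OF gH finJ])
      then show "ennreal (\<Sum>j\<in>J. q (t + real_of_int j)) * indicator {0..<1::real} t \<le> ennreal G * indicator {0..<1::real} t"
        by (intro mult_right_mono ennreal_leI) auto
    qed
    also have "\<dots> = ennreal G" by (simp add: nn_integral_cmult_indicator)
    finally show ?thesis .
  qed
  define f where "f K \<omega> = ennreal (q \<omega>) * indicator {- real K..real K} \<omega>" for K :: nat and \<omega>
  have incf: "incseq f"
    by (auto simp: incseq_def le_fun_def f_def indicator_def intro!: mult_left_mono)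
  have sup: "(SUP K. f K \<omega>) = ennreal (q \<omega>)" for \<omega>
  proof (rule antisym)
    show "(SUP K. f K \<omega>) \<le> ennreal (q \<omega>)"
      by (rule SUP_least) (auto simp: f_def indicator_def)
    obtain K :: nat where "\<bar>\<omega>\<bar> \<le> real K" using real_arch_simple by blast
    then have "f K \<omega> = ennreal (q \<omega>)" by (auto simp: f_def indicator_def)
    then show "ennreal (q \<omega>) \<le> (SUP K. f K \<omega>)" by (metis SUP_upper UNIV_I)
  qed
  have "(\<integral>\<^sup>+\<omega>. ennreal (q \<omega>) \<partial>lborel) = (\<integral>\<^sup>+\<omega>. (SUP K. f K \<omega>) \<partial>lborel)" by (simp add: sup)
  also have "\<dots> = (SUP K. integral\<^sup>N lborel (f K))"
    by (rule nn_integral_monotone_convergence_SUP[OF incf]) (unfold f_def, measurable)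
  also have "\<dots> \<le> ennreal G" by (rule SUP_least) (unfold f_def, rule B)
  finally have le: "(\<integral>\<^sup>+\<omega>. ennreal (q \<omega>) \<partial>lborel) \<le> ennreal G" .
  have "(\<integral>\<^sup>+\<omega>. ennreal (q \<omega>) \<partial>lborel) < \<infinity>" by (rule le_less_trans[OF le]) simp
  then show "integrable lborel (\<lambda>\<omega>. (cmod (FT g \<omega>))\<^sup>2)"
    by (intro integrableI_nonneg) (auto simp: q_def)
qed



lemma FT_lin:
  assumes fin: "finite S" and H: "\<And>n. n \<in> S \<Longrightarrow> inH (\<phi> n)"
  shows "FT (\<lambda>x. \<Sum>n\<in>S. a n * \<phi> n x) w = (\<Sum>n\<in>S. a n * FT (\<phi> n) w)"
proof -
  have cm: "(\<lambda>x. cis (- 2 * pi * w * x)) \<in> borel_measurable lborel"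
  proof -
    have "continuous_on UNIV (\<lambda>x. cis (- 2 * pi * w * x))" by (intro continuous_intros)
    then show ?thesis using borel_measurable_continuous_onI by simp
  qed
  have i: "integrable lborel (\<lambda>x. a n * (\<phi> n x * cis (- 2 * pi * w * x)))" if "n \<in> S" for n
    by (intro integrable_mult_right int_mult_L1[OF inH_L1[OF H[OF that]] cm, where C=1]) simp
  have "FT (\<lambda>x. \<Sum>n\<in>S. a n * \<phi> n x) w = (LINT x|lborel. (\<Sum>n\<in>S. a n * (\<phi> n x * cis (- 2 * pi * w * x))))"
    unfolding FT_def by (simp add: sum_distrib_right mult.assoc)
  also have "\<dots> = (\<Sum>n\<in>S. LINT x|lborel. a n * (\<phi> n x * cis (- 2 * pi * w * x)))"
    by (rule Bochner_Integration.integral_sum) (rule i)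
  also have "\<dots> = (\<Sum>n\<in>S. a n * FT (\<phi> n) w)"
    unfolding FT_def by (simp only: integral_mult_right_zero)
  finally show ?thesis .
qed

lemma bdd_gen:
  fixes \<Psi> :: "nat \<Rightarrow> 'b \<Rightarrow> complex"
  assumes fin: "finite I" and rb: "riesz_basis_consts \<phi> I d1 d2" and S: "S \<subseteq> I"
    and sq: "\<And>n. n \<in> I \<Longrightarrow> sqi M (\<Psi> n)"
    and Vd: "\<And>a. V (\<lambda>x. \<Sum>n\<in>S. a n * \<phi> n x) = QQ M (\<lambda>\<omega>. \<Sum>n\<in>S. a n * \<Psi> n \<omega>)"
    and f: "f \<in> fspan \<phi> S" "L2norm f = 1"
  shows "V f \<le> sqrt (1 / d1) * sqrt (\<Sum>n\<in>I. (QQ M (\<Psi> n))\<^sup>2)"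
proof -
  have d1: "d1 > 0" using rb by (auto simp: riesz_basis_consts_def)
  have finS: "finite S" using fin S finite_subset by blast
  obtain a where fa: "f = (\<lambda>x. \<Sum>n\<in>S. a n * \<phi> n x)" using f(1) unfolding fspan_def by blast
  have "V f = QQ M (\<lambda>\<omega>. \<Sum>n\<in>S. a n * \<Psi> n \<omega>)" unfolding fa by (rule Vd)
  also have "\<dots> \<le> (\<Sum>n\<in>S. cmod (a n) * QQ M (\<Psi> n))"
    by (rule QQ_lin_sum(2)[OF finS]) (use sq S in auto)
  also have "\<dots> \<le> sqrt (\<Sum>n\<in>S. (cmod (a n))\<^sup>2) * sqrt (\<Sum>n\<in>S. (QQ M (\<Psi> n))\<^sup>2)"
    by (rule CS_sqrt) (simp_all add: QQ_nonneg)
  also have "\<dots> \<le> sqrt (1 / d1) * sqrt (\<Sum>n\<in>I. (QQ M (\<Psi> n))\<^sup>2)"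
  proof (rule mult_mono)
    have "d1 * (\<Sum>n\<in>S. (cmod (a n))\<^sup>2) \<le> (L2norm f)\<^sup>2"
      using riesz_sub(1)[OF rb fin S, of a] fa by simp
    then have "(\<Sum>n\<in>S. (cmod (a n))\<^sup>2) \<le> 1 / d1" using f(2) d1 by (simp add: field_simps)
    then show "sqrt (\<Sum>n\<in>S. (cmod (a n))\<^sup>2) \<le> sqrt (1 / d1)" by simp
    show "sqrt (\<Sum>n\<in>S. (QQ M (\<Psi> n))\<^sup>2) \<le> sqrt (\<Sum>n\<in>I. (QQ M (\<Psi> n))\<^sup>2)"
      using sum_mono2[OF fin S, of "\<lambda>n. (QQ M (\<Psi> n))\<^sup>2"] by simp
  qed (use d1 in \<open>simp_all add: sum_nonneg\<close>)
  finally show ?thesis .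
qed

lemma summable_integrable_cs:
  fixes h :: "'a \<Rightarrow> real"
  assumes "h summable_on A"
  shows "integrable (count_space A) h"
proof -
  have "(\<lambda>x. norm (h x)) summable_on A" using assms summable_on_iff_abs_summable_on_real by blast
  then have "Infinite_Set_Sum.abs_summable_on h A" using abs_summable_equivalent by blast
  then show ?thesis by (simp add: Infinite_Set_Sum.abs_summable_on_def)
qed

lemma integrable_infsum_cs:
  fixes h :: "'a \<Rightarrow> real"
  assumes "integrable (count_space A) h"
  shows "infsum h A = (LINT x|count_space A. h x)"
proof -
  have "Infinite_Set_Sum.abs_summable_on h A" using assms by (simp add: Infinite_Set_Sum.abs_summable_on_def)
  then have "infsetsum h A = infsum h A" by (rule infsetsum_infsum)
  then show ?thesis by (simp add: infsetsum_def)
qed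

lemma sup_upper0:
  fixes Y :: "real set"
  assumes "\<And>y. y \<in> Y \<Longrightarrow> y \<le> B" "x \<in> Y"
  shows "x \<le> Sup (insert 0 Y)"
proof (rule cSup_upper)
  show "x \<in> insert 0 Y" using assms(2) by simp
  show "bdd_above (insert 0 Y)" using assms(1)
    by (intro bdd_aboveI[of _ "max 0 B"]) (force simp: max_def)
qed

lemma sup_least0:
  fixes Y :: "real set"
  assumes "0 \<le> B" "\<And>y. y \<in> Y \<Longrightarrow> y \<le> B"
  shows "Sup (insert 0 Y) \<le> B"
  by (rule cSup_least) (use assms in auto)

lemma part1:
  fixes r :: nat and P :: "nat \<Rightarrow> nat set" and \<phi> :: "nat \<Rightarrow> real \<Rightarrow> complex"
  assumes fin: "finite I" and H: "\<forall>n\<in>I. inH (\<phi> n)" and rb: "riesz_basis_consts \<phi> I d1 d2"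
    and disj: "\<forall>i\<in>{1..r}. \<forall>j\<in>{1..r}. i \<noteq> j \<longrightarrow> P i \<inter> P j = {}"
    and un: "(\<Union>i\<in>{1..r}. P i) = I"
  shows "Econc (fspan \<phi> I) z \<le> sqrt (d2 / d1 * (\<Sum>i=1..r. (Econc (fspan \<phi> (P i)) z)\<^sup>2))"
proof -
  have d1: "d1 > 0" and d12: "d1 \<le> d2" using rb by (auto simp: riesz_basis_consts_def)
  define J where "J = - {-z<..<z}"
  have Jm[measurable]: "J \<in> sets borel" unfolding J_def by (intro borel_comp) simp
  define \<Psi> where "\<Psi> n w = (indicator J w :: complex) * FT (\<phi> n) w" for n w
  define V where "V f = normOn J (FT f)" for f
  have sq: "sqi lborel (\<Psi> n)" if n: "n \<in> I" for n
  proof -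
    have hn: "inH (\<phi> n)" using H n by blast
    note pl = planch[OF hn]
    have [measurable]: "FT (\<phi> n) \<in> borel_measurable borel" using pl(1) by simp
    have "\<Psi> n \<in> borel_measurable lborel" unfolding \<Psi>_def by measurable
    moreover have "integrable lborel (\<lambda>w. indicator J w *\<^sub>R (cmod (FT (\<phi> n) w))\<^sup>2)"
      by (rule integrable_mult_indicator) (use pl(2) in auto)
    moreover have "(\<lambda>w. indicator J w *\<^sub>R (cmod (FT (\<phi> n) w))\<^sup>2) = (\<lambda>w. (cmod (\<Psi> n w))\<^sup>2)"
      by (auto simp: \<Psi>_def indicator_def)
    ultimately show ?thesis by (simp add: sqi_def)
  qed
  have Vd: "V (\<lambda>x. \<Sum>n\<in>S. a n * \<phi> n x) = QQ lborel (\<lambda>\<omega>. \<Sum>n\<in>S. a n * \<Psi> n \<omega>)" if S: "S \<subseteq> I" for S a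
  proof -
    have finS: "finite S" using fin S finite_subset by blast
    have e: "indicator J w *\<^sub>R (cmod (FT (\<lambda>x. \<Sum>n\<in>S. a n * \<phi> n x) w))\<^sup>2 = (cmod (\<Sum>n\<in>S. a n * \<Psi> n w))\<^sup>2" for w
    proof -
      have "FT (\<lambda>x. \<Sum>n\<in>S. a n * \<phi> n x) w = (\<Sum>n\<in>S. a n * FT (\<phi> n) w)"
        by (rule FT_lin[OF finS]) (use H S in auto)
      moreover have "(\<Sum>n\<in>S. a n * \<Psi> n w) = indicator J w * (\<Sum>n\<in>S. a n * FT (\<phi> n) w)"
        unfolding \<Psi>_def by (simp add: sum_distrib_left algebra_simps)
      ultimately show ?thesis by (auto simp: indicator_def)
    qed
    show ?thesis unfolding V_def normOn_def QQ_def set_lebesgue_integral_def e ..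
  qed
  have Eb: "V f \<le> Econc (fspan \<phi> (P i)) z" if i: "i \<in> {1..r}" and f: "f \<in> fspan \<phi> (P i)" "L2norm f = 1" for i f
  proof -
    have PI: "P i \<subseteq> I" using un i by blast
    note bd = bdd_gen[OF fin rb PI sq Vd[OF PI]]
    have "V f \<le> sqrt (1 / d1) * sqrt (\<Sum>n\<in>I. (QQ lborel (\<Psi> n))\<^sup>2)" if "f \<in> fspan \<phi> (P i)" "L2norm f = 1" for f
      using bd that by blast
    then show ?thesis unfolding Econc_def
      by (intro sup_upper0[where B="sqrt (1 / d1) * sqrt (\<Sum>n\<in>I. (QQ lborel (\<Psi> n))\<^sup>2)"])
         (use f in \<open>auto simp: V_def J_def\<close>)
  qed
  show ?thesis unfolding Econc_def[of "fspan \<phi> I"]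
  proof (rule sup_least0)
    show "0 \<le> sqrt (d2 / d1 * (\<Sum>i=1..r. (Econc (fspan \<phi> (P i)) z)\<^sup>2))"
      using d1 d12 by (simp add: sum_nonneg)
    show "y \<le> sqrt (d2 / d1 * (\<Sum>i=1..r. (Econc (fspan \<phi> (P i)) z)\<^sup>2))"
      if yY: "y \<in> {normOn (- {- z<..<z}) (FT f) |f. f \<in> fspan \<phi> I \<and> L2norm f = 1}" for y
    proof -
      obtain f where y: "y = V f" and f: "f \<in> fspan \<phi> I" "L2norm f = 1"
        using yY unfolding V_def J_def by blast
      show ?thesis unfolding y
        by (rule core[where E="\<lambda>i. Econc (fspan \<phi> (P i)) z", OF fin rb disj un sq Vd Eb f])
    qed
  qed
qed

lemma part2:
  fixes r :: nat and P :: "nat \<Rightarrow> nat set" and \<phi> :: "nat \<Rightarrow> real \<Rightarrow> complex" and \<omega> :: "int \<Rightarrow> real"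
  assumes fin: "finite I" and H: "\<forall>n\<in>I. inH (\<phi> n)" and rb: "riesz_basis_consts \<phi> I d1 d2"
    and disj: "\<forall>i\<in>{1..r}. \<forall>j\<in>{1..r}. i \<noteq> j \<longrightarrow> P i \<inter> P j = {}"
    and un: "(\<Union>i\<in>{1..r}. P i) = I"
    and fr: "fourier_frame \<omega>"
  shows "Etilde \<omega> (fspan \<phi> I) N \<le> sqrt (d2 / d1 * (\<Sum>i=1..r. (Etilde \<omega> (fspan \<phi> (P i)) N)\<^sup>2))"
proof -
  have d1: "d1 > 0" and d12: "d1 \<le> d2" using rb by (auto simp: riesz_basis_consts_def)
  define A where "A = {n::int. \<bar>n\<bar> > int N}"
  define M where "M = count_space A"
  define \<Psi> where "\<Psi> n k = FT (\<phi> n) (\<omega> k)" for n k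
  define V where "V f = sqrt (\<Sum>\<^sub>\<infinity>k\<in>A. (cmod (FT f (\<omega> k)))\<^sup>2)" for f
  have sq: "sqi M (\<Psi> n)" if n: "n \<in> I" for n
  proof -
    have hn: "inH (\<phi> n)" using H n by blast
    have "(\<lambda>k. (cmod (FT (\<phi> n) (\<omega> k)))\<^sup>2) summable_on UNIV"
      using fr hn unfolding fourier_frame_def by blast
    then have "(\<lambda>k. (cmod (FT (\<phi> n) (\<omega> k)))\<^sup>2) summable_on A"
      by (rule summable_on_subset_banach) simp
    then have "integrable M (\<lambda>k. (cmod (\<Psi> n k))\<^sup>2)"
      unfolding M_def \<Psi>_def by (rule summable_integrable_cs)
    then show ?thesis by (simp add: sqi_def M_def)
  qed
  have Vd: "V (\<lambda>x. \<Sum>n\<in>S. a n * \<phi> n x) = QQ M (\<lambda>k. \<Sum>n\<in>S. a n * \<Psi> n k)" if S: "S \<subseteq> I" for S a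
  proof -
    have finS: "finite S" using fin S finite_subset by blast
    have e: "FT (\<lambda>x. \<Sum>n\<in>S. a n * \<phi> n x) (\<omega> k) = (\<Sum>n\<in>S. a n * \<Psi> n k)" for k
      unfolding \<Psi>_def by (rule FT_lin[OF finS]) (use H S in auto)
    have "sqi M (\<lambda>k. \<Sum>n\<in>S. a n * \<Psi> n k)"
      by (rule QQ_lin_sum(1)[OF finS]) (use sq S in auto)
    then have "integrable (count_space A) (\<lambda>k. (cmod (\<Sum>n\<in>S. a n * \<Psi> n k))\<^sup>2)"
      by (simp add: sqi_def M_def)
    then show ?thesis unfolding V_def QQ_def e M_def by (simp add: integrable_infsum_cs)
  qed
  have V0: "V f \<ge> 0" for f unfolding V_def by (simp add: infsum_nonneg)
  have Vsq: "(\<Sum>\<^sub>\<infinity>k\<in>A. (cmod (FT f (\<omega> k)))\<^sup>2) = (V f)\<^sup>2" for f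
    unfolding V_def by (simp add: infsum_nonneg)
  have Eb: "V f \<le> Etilde \<omega> (fspan \<phi> (P i)) N" if i: "i \<in> {1..r}" and f: "f \<in> fspan \<phi> (P i)" "L2norm f = 1" for i f
  proof -
    have PI: "P i \<subseteq> I" using un i by blast
    define B where "B = sqrt (1 / d1) * sqrt (\<Sum>n\<in>I. (QQ M (\<Psi> n))\<^sup>2)"
    have bd: "V g \<le> B" if "g \<in> fspan \<phi> (P i)" "L2norm g = 1" for g
      unfolding B_def by (rule bdd_gen[OF fin rb PI sq Vd[OF PI] that])
    have bd2: "(V g)\<^sup>2 \<le> B\<^sup>2" if "g \<in> fspan \<phi> (P i)" "L2norm g = 1" for g
      using bd[OF that] V0[of g] by (simp add: power_mono)
    have "(V f)\<^sup>2 \<le> Sup (insert 0 {(\<Sum>\<^sub>\<infinity>n\<in>{n. \<bar>n\<bar> > int N}. (cmod (FT g (\<omega> n)))\<^sup>2) | g. g \<in> fspan \<phi> (P i) \<and> L2norm g = 1})"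
      by (intro sup_upper0[where B="B\<^sup>2"]) (use f bd2 in \<open>auto simp: Vsq[symmetric] A_def\<close>)
    then have "sqrt ((V f)\<^sup>2) \<le> Etilde \<omega> (fspan \<phi> (P i)) N"
      unfolding Etilde_def by (rule real_sqrt_le_mono)
    then show ?thesis using V0[of f] by simp
  qed
  define T where "T = d2 / d1 * (\<Sum>i=1..r. (Etilde \<omega> (fspan \<phi> (P i)) N)\<^sup>2)"
  have T0: "T \<ge> 0" unfolding T_def using d1 d12 by (simp add: sum_nonneg)
  have "Sup (insert 0 {(\<Sum>\<^sub>\<infinity>n\<in>{n. \<bar>n\<bar> > int N}. (cmod (FT f (\<omega> n)))\<^sup>2) | f. f \<in> fspan \<phi> I \<and> L2norm f = 1}) \<le> T"
  proof (rule sup_least0[OF T0])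
    fix y assume yY: "y \<in> {(\<Sum>\<^sub>\<infinity>n\<in>{n. \<bar>n\<bar> > int N}. (cmod (FT f (\<omega> n)))\<^sup>2) | f. f \<in> fspan \<phi> I \<and> L2norm f = 1}"
    then obtain f where y: "y = (V f)\<^sup>2" and f: "f \<in> fspan \<phi> I" "L2norm f = 1"
      unfolding Vsq[symmetric] A_def by blast
    have "V f \<le> sqrt T" unfolding T_def
      by (rule core[where E="\<lambda>i. Etilde \<omega> (fspan \<phi> (P i)) N", OF fin rb disj un sq Vd Eb f])
    then have "(V f)\<^sup>2 \<le> (sqrt T)\<^sup>2" using V0[of f] by (simp add: power_mono)
    then show "y \<le> T" using T0 y by simp
  qed
  then show ?thesis unfolding Etilde_def[of _ "fspan \<phi> I"] T_def[symmetric] by (rule real_sqrt_le_mono)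
qed


theorem lemma5p9:
  fixes I :: "nat set" and \<phi> :: "nat \<Rightarrow> real \<Rightarrow> complex" and d1 d2 :: real
    and r :: nat and P :: "nat \<Rightarrow> nat set"
  assumes "finite I"
    and "\<forall>n\<in>I. inH (\<phi> n)"
    and "riesz_basis_consts \<phi> I d1 d2"
    and "\<forall>i\<in>{1..r}. \<forall>j\<in>{1..r}. i \<noteq> j \<longrightarrow> P i \<inter> P j = {}"
    and "(\<Union>i\<in>{1..r}. P i) = I"
  shows "(\<forall>z::real. z \<ge> 0 \<longrightarrow>
            Econc (fspan \<phi> I) z \<le> sqrt (d2 / d1 * (\<Sum>i=1..r. (Econc (fspan \<phi> (P i)) z)\<^sup>2)))
       \<and> (\<forall>\<omega>. fourier_frame \<omega> \<longrightarrow> (\<forall>N::nat.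
            Etilde \<omega> (fspan \<phi> I) N \<le> sqrt (d2 / d1 * (\<Sum>i=1..r. (Etilde \<omega> (fspan \<phi> (P i)) N)\<^sup>2))))"
    using part1[OF assms(1,2,3,4,5)] part2[OF assms(1,2,3,4,5)] by blast

end
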